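(* Let $V$ be a real vector space with a symplectic form $\sigma$, $\mu$ a finitely additive probability measure on the lattice $\mathcal{L}(V)$ of all linear subspaces of $V$, and $K,H\in\mathcal{L}(V)$ symplectic planes. Then $\mu(K)=\mu(H)$.
   Context: A symplectic form is a bilinear, antisymmetric, non-degenerate map $\sigma:V\times V\to\mathbb{R}$. For a subspace $H$, $H'=\{v\in V:\sigma(v,h)=0\ \forall h\in H\}$. $\mathcal{L}(V)$ is ordered by inclusion, with $H\vee K=H+K$, $H\wedge K=H\cap K$, $0=\{0\}$, $1=V$. $H,K$ are separated if $H\subset K'$. A symplectic plane is a two-dimensional subspace $H$ with $H\cap H'=\{0\}$. A finitely additive probability measure on $\mathcal{L}(V)$ is a map $\mu$ into $[0,1]$ with $\mu(\{0\})=0$, $\mu(V)=1$, monotone, and $\mu(H_1+\dots+H_n)=\sum_k\mu(H_k)$ whenever $H_1,\dots,H_n$ are pairwise separated. *)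

theory Defs
  imports "HOL-Analysis.Analysis"
begin

definition symplectic_form :: "('v::real_vector \<Rightarrow> 'v \<Rightarrow> real) \<Rightarrow> bool" where
  "symplectic_form \<sigma> \<longleftrightarrow> bilinear \<sigma> \<and> (\<forall>u v. \<sigma> u v = - \<sigma> v u)
     \<and> (\<forall>u. (\<forall>v. \<sigma> u v = 0) \<longrightarrow> u = 0)"

definition sperp :: "('v::real_vector \<Rightarrow> 'v \<Rightarrow> real) \<Rightarrow> 'v set \<Rightarrow> 'v set" where
  "sperp \<sigma> H = {v. \<forall>h\<in>H. \<sigma> v h = 0}"

definition separated :: "('v::real_vector \<Rightarrow> 'v \<Rightarrow> real) \<Rightarrow> 'v set \<Rightarrow> 'v set \<Rightarrow> bool" where
  "separated \<sigma> H K \<longleftrightarrow> H \<subseteq> sperp \<sigma> K"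

definition symplectic_plane :: "('v::real_vector \<Rightarrow> 'v \<Rightarrow> real) \<Rightarrow> 'v set \<Rightarrow> bool" where
  "symplectic_plane \<sigma> H \<longleftrightarrow> subspace H \<and> dim H = 2 \<and> H \<inter> sperp \<sigma> H = {0}"

text \<open>Finitely additive probability measure on the lattice of all linear subspaces.
  The join H_1 \<or> ... \<or> H_n = H_1 + ... + H_n is the span of the union.\<close>
definition fa_prob_measure :: "('v::real_vector \<Rightarrow> 'v \<Rightarrow> real) \<Rightarrow> ('v set \<Rightarrow> real) \<Rightarrow> bool" where
  "fa_prob_measure \<sigma> \<mu> \<longleftrightarrow>
     (\<forall>H. subspace H \<longrightarrow> 0 \<le> \<mu> H \<and> \<mu> H \<le> 1)
   \<and> \<mu> {0} = 0 \<and> \<mu> UNIV = 1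
   \<and> (\<forall>H K. subspace H \<and> subspace K \<and> H \<subseteq> K \<longrightarrow> \<mu> H \<le> \<mu> K)
   \<and> (\<forall>(n::nat) Hs. (\<forall>i<n. subspace (Hs i))
        \<and> (\<forall>i<n. \<forall>j<n. i \<noteq> j \<longrightarrow> separated \<sigma> (Hs i) (Hs j))
        \<longrightarrow> \<mu> (span (\<Union>i<n. Hs i)) = (\<Sum>i<n. \<mu> (Hs i)))"

end

theory Submission
  imports Defs
begin

lemma vanish:
  assumes b: "bilinear \<sigma>" and z: "\<forall>x\<in>A. \<forall>y\<in>B. \<sigma> x y = 0"
    and x: "x \<in> span A" and y: "y \<in> span B"
  shows "\<sigma> x y = 0"
proof -
  have l1: "linear (\<lambda>x. \<sigma> x y)" for y using b unfolding bilinear_def by (elim conjE allE)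
  have l2: "linear (\<sigma> x)" using b unfolding bilinear_def by (elim conjE allE)
  have h: "\<sigma> x y = 0" if yB: "y \<in> B" for y
  proof -
    have "\<And>u. u \<in> A \<Longrightarrow> \<sigma> u y = 0" using z yB by blast
    then show ?thesis using linear_eq_0_on_span[of "\<lambda>x. \<sigma> x y" A x, OF l1 _ x] by blast
  qed
  show ?thesis using linear_eq_0_on_span[of "\<sigma> x" B y, OF l2 _ y] h by blast
qed

lemma sf_anti: assumes "symplectic_form \<sigma>" shows "\<sigma> u v = - \<sigma> v u"
proof -
  have "\<forall>u v. \<sigma> u v = - \<sigma> v u"
    using assms unfolding symplectic_form_def by (elim conjE)
  then show ?thesis by (elim allE)
qed
lemma sf_bil: assumes "symplectic_form \<sigma>" shows "bilinear \<sigma>"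
  using assms unfolding symplectic_form_def by (elim conjE)
lemma self_zero:
  assumes "symplectic_form \<sigma>" shows "\<sigma> x x = 0"
proof -
  have "\<sigma> x x = - \<sigma> x x" by (rule sf_anti[OF assms])
  then show ?thesis by simp
qed

lemma two_add:
  assumes "fa_prob_measure \<sigma> \<mu>" "subspace A" "subspace B"
    "separated \<sigma> A B" "separated \<sigma> B A"
  shows "\<mu> (span (A \<union> B)) = \<mu> A + \<mu> B"
proof -
  let ?Hs = "\<lambda>i::nat. if i = 0 then A else B"
  have "\<mu> (span (\<Union>i<2. ?Hs i)) = (\<Sum>i<2. \<mu> (?Hs i))"
    using assms(1) unfolding fa_prob_measure_def
    apply (elim conjE)
    apply (erule allE[of _ 2], erule allE[of _ ?Hs], erule mp)
    using assms(2-5) by (auto simp: less_2_cases_iff)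
  moreover have "(\<Union>i<2. ?Hs i) = A \<union> B"
    by (auto simp: less_2_cases_iff)
  ultimately show ?thesis by (simp add: numeral_2_eq_2)
qed

lemma null_line:
  assumes sf: "symplectic_form \<sigma>" and m: "fa_prob_measure \<sigma> \<mu>"
  shows "\<mu> (span {g}) = 0"
proof -
  have b: "bilinear \<sigma>" using sf by (rule sf_bil)
  have sep: "separated \<sigma> (span {g}) (span {g})"
    unfolding separated_def sperp_def
    using vanish[OF b, of "{g}" "{g}"] self_zero[OF sf] by auto
  have "\<mu> (span (span {g} \<union> span {g})) = \<mu> (span {g}) + \<mu> (span {g})"
    by (rule two_add[OF m]) (use sep in auto)
  then show ?thesis by (simp add: span_span)
qed

lemma add_vec:
  assumes sf: "symplectic_form \<sigma>" and m: "fa_prob_measure \<sigma> \<mu>"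
    and ab: "\<sigma> a b \<noteq> 0"
  shows "\<mu> (span {a, b, g}) = \<mu> (span {a, b})"
proof -
  have b: "bilinear \<sigma>" and anti: "\<And>u v. \<sigma> u v = - \<sigma> v u"
    using sf by (auto intro: sf_bil sf_anti)
  have ba: "\<sigma> b a \<noteq> 0" using ab anti[of a b] by auto
  define \<alpha> where "\<alpha> = \<sigma> g b / \<sigma> a b"
  define \<beta> where "\<beta> = \<sigma> g a / \<sigma> b a"
  define g' where "g' = g - \<alpha> *\<^sub>R a - \<beta> *\<^sub>R b"
  have aa: "\<sigma> a a = 0" and bb: "\<sigma> b b = 0" using self_zero[OF sf] by auto
  have g'a: "\<sigma> g' a = 0"
    unfolding g'_def using ba aa
    by (simp add: bilinear_lsub[OF b] bilinear_lmul[OF b] \<beta>_def)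
  have g'b: "\<sigma> g' b = 0"
    unfolding g'_def using ab bb
    by (simp add: bilinear_lsub[OF b] bilinear_lmul[OF b] \<alpha>_def)
  have ag': "\<sigma> a g' = 0" "\<sigma> b g' = 0" using g'a g'b anti[of a g'] anti[of b g'] by simp_all
  have s1: "separated \<sigma> (span {a, b}) (span {g'})"
    unfolding separated_def sperp_def
  proof (intro subsetI CollectI ballI)
    fix v h assume v: "v \<in> span {a, b}" and h: "h \<in> span {g'}"
    show "\<sigma> v h = 0" by (rule vanish[OF b _ v h]) (use ag' in blast)
  qed
  have s2: "separated \<sigma> (span {g'}) (span {a, b})"
    unfolding separated_def sperp_def
  proof (intro subsetI CollectI ballI)
    fix v h assume v: "v \<in> span {g'}" and h: "h \<in> span {a, b}"
    show "\<sigma> v h = 0" by (rule vanish[OF b _ v h]) (use g'a g'b in blast)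
  qed
  let ?S = "span {a, b} \<union> span {g'}"
  have aS: "a \<in> span ?S" by (rule span_base, rule UnI1, rule span_base) simp
  have bS: "b \<in> span ?S" by (rule span_base, rule UnI1, rule span_base) simp
  have g'S: "g' \<in> span ?S" by (rule span_base, rule UnI2, rule span_base) simp
  have gS: "g \<in> span ?S"
  proof -
    have "g = g' + \<alpha> *\<^sub>R a + \<beta> *\<^sub>R b" unfolding g'_def by simp
    moreover have "g' + \<alpha> *\<^sub>R a + \<beta> *\<^sub>R b \<in> span ?S"
      by (intro span_add span_scale aS bS g'S)
    ultimately show ?thesis by simp
  qed
  have T: "span {a, b} \<subseteq> span {a, b, g}" by (rule span_mono) blast
  have g'T: "g' \<in> span {a, b, g}" unfolding g'_def
    by (intro span_diff span_scale span_base) auto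
  have eq: "span ?S = span {a, b, g}"
  proof (rule subset_antisym)
    have "span {g'} \<subseteq> span {a, b, g}"
      using g'T by (simp add: span_minimal)
    with T show "span ?S \<subseteq> span {a, b, g}"
      by (intro span_minimal) auto
  next
    show "span {a, b, g} \<subseteq> span ?S"
      using aS bS gS by (intro span_minimal) auto
  qed
  have "\<mu> (span (span {a, b} \<union> span {g'})) = \<mu> (span {a, b}) + \<mu> (span {g'})"
    by (rule two_add[OF m _ _ s1 s2]) auto
  then show ?thesis using eq null_line[OF sf m] by simp
qed

lemma share:
  assumes sf: "symplectic_form \<sigma>" and m: "fa_prob_measure \<sigma> \<mu>"
    and "\<sigma> a b \<noteq> 0" "\<sigma> a c \<noteq> 0"
  shows "\<mu> (span {a, b}) = \<mu> (span {a, c})"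
proof -
  have "\<mu> (span {a, b}) = \<mu> (span {a, b, c})" using add_vec[OF sf m assms(3)] by simp
  also have "{a, b, c} = {a, c, b}" by auto
  also have "\<mu> (span {a, c, b}) = \<mu> (span {a, c})" using add_vec[OF sf m assms(4)] by simp
  finally show ?thesis .
qed

lemma chainD:
  assumes sf: "symplectic_form \<sigma>" and m: "fa_prob_measure \<sigma> \<mu>"
    and ab: "\<sigma> a b \<noteq> 0" and cd: "\<sigma> c d \<noteq> 0" and ac: "\<sigma> a c \<noteq> 0"
  shows "\<mu> (span {a, b}) = \<mu> (span {c, d})"
proof -
  have ca: "\<sigma> c a \<noteq> 0" using ac sf_anti[OF sf, of c a] by auto
  have "\<mu> (span {a, b}) = \<mu> (span {a, c})" by (rule share[OF sf m ab ac])
  also have "{a, c} = {c, a}" by auto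
  also have "\<mu> (span {c, a}) = \<mu> (span {c, d})" by (rule share[OF sf m ca cd])
  finally show ?thesis .
qed

lemma plane_basis:
  assumes sf: "symplectic_form \<sigma>" and p: "symplectic_plane \<sigma> H"
  obtains e f where "H = span {e, f}" "\<sigma> e f \<noteq> 0"
proof -
  have sub: "subspace H" and d: "dim H = 2" and z: "H \<inter> sperp \<sigma> H = {0}"
    using p by (auto simp: symplectic_plane_def)
  have b: "bilinear \<sigma>" using sf by (rule sf_bil)
  obtain B where B: "B \<subseteq> H" "independent B" "H \<subseteq> span B" "card B = dim H"
    by (rule basis_exists)
  then obtain e f where ef: "B = {e, f}" "e \<noteq> f" using d by (auto simp: card_2_iff)
  have HB: "H = span {e, f}" using span_subspace[OF B(1) B(3) sub] ef by simp
  have e0: "e \<noteq> 0" using B(2) ef dependent_zero[of "{e, f}"] by auto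
  have "\<sigma> e f \<noteq> 0"
  proof
    assume ef0: "\<sigma> e f = 0"
    have zz: "\<forall>x\<in>{e}. \<forall>y\<in>{e, f}. \<sigma> x y = 0"
      using ef0 self_zero[OF sf, of e] by blast
    have es: "e \<in> span {e}" by (rule span_base) blast
    have "\<sigma> e h = 0" if "h \<in> span {e, f}" for h
      by (rule vanish[OF b zz es that])
    then have "e \<in> sperp \<sigma> H" unfolding sperp_def HB by blast
    moreover have "e \<in> H" using B(1) ef by blast
    ultimately have "e \<in> H \<inter> sperp \<sigma> H" by blast
    then show False using z e0 by blast
  qed
  with HB that show ?thesis by blast
qed

theorem lemmaB2:
  fixes \<sigma> :: "'v::real_vector \<Rightarrow> 'v \<Rightarrow> real" and \<mu> :: "'v set \<Rightarrow> real"
    and K H :: "'v set"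
  assumes "symplectic_form \<sigma>"
    and "fa_prob_measure \<sigma> \<mu>"
    and "symplectic_plane \<sigma> K"
    and "symplectic_plane \<sigma> H"
  shows "\<mu> K = \<mu> H"
proof -
  note sf = assms(1) and m = assms(2)
  have b: "bilinear \<sigma>" and anti: "\<And>u v. \<sigma> u v = - \<sigma> v u"
    using sf by (auto intro: sf_bil sf_anti)
  obtain e f where K: "K = span {e, f}" and ef: "\<sigma> e f \<noteq> 0"
    using plane_basis[OF sf assms(3)] by blast
  obtain h1 h2 where H: "H = span {h1, h2}" and h12: "\<sigma> h1 h2 \<noteq> 0"
    using plane_basis[OF sf assms(4)] by blast
  have fe: "\<sigma> f e \<noteq> 0" using ef anti[of e f] by auto
  have h21: "\<sigma> h2 h1 \<noteq> 0" using h12 anti[of h1 h2] by auto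
  have Ks: "K = span {f, e}" using K by (simp add: insert_commute)
  have Hs: "H = span {h2, h1}" using H by (simp add: insert_commute)
  show ?thesis
  proof (cases "\<sigma> e h1 \<noteq> 0 \<or> \<sigma> e h2 \<noteq> 0 \<or> \<sigma> f h1 \<noteq> 0 \<or> \<sigma> f h2 \<noteq> 0")
    case True
    then show ?thesis
    proof (elim disjE)
      assume "\<sigma> e h1 \<noteq> 0" then show ?thesis using chainD[OF sf m ef h12] K H by simp
    next
      assume "\<sigma> e h2 \<noteq> 0" then show ?thesis using chainD[OF sf m ef h21] K Hs by simp
    next
      assume "\<sigma> f h1 \<noteq> 0" then show ?thesis using chainD[OF sf m fe h12] Ks H by simp
    next
      assume "\<sigma> f h2 \<noteq> 0" then show ?thesis using chainD[OF sf m fe h21] Ks Hs by simp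
    qed
  next
    case False
    define x where "x = e + h1"
    have fx: "\<sigma> f x \<noteq> 0" using False fe unfolding x_def
      by (simp add: bilinear_radd[OF b] anti[of f h1])
    have xh2: "\<sigma> x h2 \<noteq> 0" using False h12 unfolding x_def
      by (simp add: bilinear_ladd[OF b])
    have h2x: "\<sigma> h2 x \<noteq> 0" using xh2 anti[of h2 x] by auto
    have "\<mu> K = \<mu> (span {x, h2})" using chainD[OF sf m fe xh2 fx] Ks by simp
    also have "{x, h2} = {h2, x}" by auto
    also have "\<mu> (span {h2, x}) = \<mu> (span {h2, h1})" by (rule share[OF sf m h2x h21])
    finally show ?thesis using Hs by simp
  qed
qed

end
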